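(* Let $X$, $\mathcal{B}$, $\Delta$ and the Gelfand transform $f\mapsto\hat f$ be as in the context (in particular $\mathcal{B}$ vanishes nowhere on $X$), and let $\mathcal{B}_c:=\{\varphi\in\mathcal{B}:\hat\varphi\in C_c(\Delta)\}$, where $C_c(\Delta)$ denotes the continuous compactly supported functions on $\Delta$. Then $\mathcal{B}_c$ is dense in $\mathcal{B}$ with respect to the supremum norm.
   Context: $X$ is a nonempty set and $\mathcal{B}$ is a real vector space of bounded functions $X\to\mathbb{R}$ closed under pointwise multiplication, pointwise max and min, with $f\wedge1\in\mathcal{B}$ for $f\in\mathcal{B}$. Assume that for every $x\in X$ there is $f\in\mathcal{B}$ with $f(x)\neq0$. $A(\mathcal{B})$ is the supremum-norm closure of $\mathcal{B}+i\mathcal{B}$, a commutative $C^\ast$-algebra with pointwise operations and complex conjugation as involution; $\Delta$ is its spectrum (nonzero continuous multiplicative linear functionals with the Gelfand topology), locally compact Hausdorff; $\hat a(\varphi)=\varphi(a)$ is the Gelfand transform, an isometric $^\ast$-isomorphism $A(\mathcal{B})\to C_0(\Delta)$. *)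

theory Defs
  imports "HOL-Analysis.Analysis"
begin

text \<open>The set X is represented by the (nonempty) type 'a; functions on X are
  total functions on 'a.\<close>

definition function_lattice_algebra :: "('a \<Rightarrow> real) set \<Rightarrow> bool" where
  "function_lattice_algebra B \<longleftrightarrow>
     (\<forall>f\<in>B. bounded (range f)) \<and>
     (\<lambda>x. 0) \<in> B \<and>
     (\<forall>f\<in>B. \<forall>g\<in>B. (\<lambda>x. f x + g x) \<in> B) \<and>
     (\<forall>c. \<forall>f\<in>B. (\<lambda>x. c * f x) \<in> B) \<and>
     (\<forall>f\<in>B. \<forall>g\<in>B. (\<lambda>x. f x * g x) \<in> B) \<and>
     (\<forall>f\<in>B. \<forall>g\<in>B. (\<lambda>x. max (f x) (g x)) \<in> B) \<and>
     (\<forall>f\<in>B. \<forall>g\<in>B. (\<lambda>x. min (f x) (g x)) \<in> B) \<and>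
     (\<forall>f\<in>B. (\<lambda>x. min (f x) 1) \<in> B)"

text \<open>A(B): closure in the supremum norm of B + iB.\<close>
definition A_alg :: "('a \<Rightarrow> real) set \<Rightarrow> ('a \<Rightarrow> complex) set" where
  "A_alg B = {a. \<forall>\<epsilon>>0. \<exists>f\<in>B. \<exists>g\<in>B.
        \<forall>x. cmod (a x - (complex_of_real (f x) + \<i> * complex_of_real (g x))) \<le> \<epsilon>}"

text \<open>Spectrum: nonzero continuous (= bounded) multiplicative linear functionals on A,
  represented as extensional functions on A.\<close>
definition gelfand_spectrum :: "('a \<Rightarrow> complex) set \<Rightarrow> (('a \<Rightarrow> complex) \<Rightarrow> complex) set" where
  "gelfand_spectrum A = {\<psi> \<in> extensional A.
      (\<forall>a\<in>A. \<forall>b\<in>A. \<psi> (\<lambda>x. a x + b x) = \<psi> a + \<psi> b) \<and>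
      (\<forall>c. \<forall>a\<in>A. \<psi> (\<lambda>x. c * a x) = c * \<psi> a) \<and>
      (\<forall>a\<in>A. \<forall>b\<in>A. \<psi> (\<lambda>x. a x * b x) = \<psi> a * \<psi> b) \<and>
      (\<exists>a\<in>A. \<psi> a \<noteq> 0) \<and>
      (\<exists>C. \<forall>a\<in>A. \<forall>M. (\<forall>x. cmod (a x) \<le> M) \<longrightarrow> cmod (\<psi> a) \<le> C * M)}"

text \<open>Gelfand topology: weak-* topology, i.e. topology of pointwise convergence on A.\<close>
definition gelfand_topology :: "('a \<Rightarrow> complex) set \<Rightarrow> (('a \<Rightarrow> complex) \<Rightarrow> complex) topology" where
  "gelfand_topology A =
     subtopology (product_topology (\<lambda>_. euclidean) A) (gelfand_spectrum A)"

definition gelfand_transform :: "('a \<Rightarrow> complex) \<Rightarrow> (('a \<Rightarrow> complex) \<Rightarrow> complex) \<Rightarrow> complex" where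
  "gelfand_transform a = (\<lambda>\<psi>. \<psi> a)"

definition compactly_supported_transform :: "('a \<Rightarrow> complex) set \<Rightarrow> ('a \<Rightarrow> complex) \<Rightarrow> bool" where
  "compactly_supported_transform A a \<longleftrightarrow>
     compactin (gelfand_topology A)
       ((gelfand_topology A) closure_of {\<psi> \<in> gelfand_spectrum A. gelfand_transform a \<psi> \<noteq> 0})"

definition B_c :: "('a \<Rightarrow> real) set \<Rightarrow> ('a \<Rightarrow> real) set" where
  "B_c B = {\<phi> \<in> B. compactly_supported_transform (A_alg B) (\<lambda>x. complex_of_real (\<phi> x))}"

end

theory Submission
  imports Defs
begin

lemma cmult_cont:
  fixes f g :: "'a \<Rightarrow> 'b::real_normed_algebra"
  shows "continuous_map X euclidean f \<Longrightarrow> continuous_map X euclidean g \<Longrightarrow> continuous_map X euclidean (\<lambda>x. f x * g x)"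
  by (simp add: continuous_map_atin tendsto_mult)

lemma cont_proj:
  "continuous_map (product_topology (\<lambda>_. euclidean) I) euclidean (\<lambda>\<psi>. \<psi> k)"
proof (cases "k \<in> I")
  case True
  then show ?thesis using continuous_map_product_projection[of k I "\<lambda>_. euclidean"] by simp
next
  case False
  show ?thesis
  proof (rule continuous_map_eq[of _ _ "\<lambda>\<psi>. undefined"])
    show "continuous_map (product_topology (\<lambda>_. euclidean) I) euclidean (\<lambda>\<psi>. undefined)" by simp
  next
    fix \<psi> assume "\<psi> \<in> topspace (product_topology (\<lambda>_. euclidean) I)"
    then show "undefined = \<psi> k" using False by (auto simp: PiE_def extensional_def)
  qed
qed

lemma closedin_all:
  assumes "\<And>i. i \<in> I \<Longrightarrow> closedin X {x \<in> topspace X. Q i x}"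
  shows "closedin X {x \<in> topspace X. \<forall>i\<in>I. Q i x}"
proof (cases "I = {}")
  case True then show ?thesis by simp
next
  case False
  have "{x \<in> topspace X. \<forall>i\<in>I. Q i x} = (\<Inter>i\<in>I. {x \<in> topspace X. Q i x})" using False by auto
  moreover have "closedin X (\<Inter>i\<in>I. {x \<in> topspace X. Q i x})"
    using False assms by (intro closedin_INT) auto
  ultimately show ?thesis by simp
qed

lemma ceq:
  fixes h1 h2 :: "'a \<Rightarrow> 'b::real_normed_vector"
  assumes "continuous_map X euclidean h1" "continuous_map X euclidean h2"
  shows "closedin X {x \<in> topspace X. h1 x = h2 x}"
proof -
  have "closedin X {x \<in> topspace X. h1 x - h2 x \<in> {0}}"
    by (rule closedin_continuous_map_preimage) (auto intro: continuous_map_diff assms simp: closed_closedin[symmetric])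
  then show ?thesis by simp
qed

lemma cle:
  fixes h :: "'a \<Rightarrow> 'b::real_normed_vector"
  assumes "continuous_map X euclidean h"
  shows "closedin X {x \<in> topspace X. norm (h x) \<le> M}"
proof -
  have "closedin X {x \<in> topspace X. norm (h x) \<in> {..M}}"
    by (rule closedin_continuous_map_preimage) (auto intro: continuous_map_norm assms simp: closed_closedin[symmetric])
  then show ?thesis by simp
qed

lemma A_real:
  assumes "function_lattice_algebra B" "h \<in> B"
  shows "(\<lambda>x. complex_of_real (h x)) \<in> A_alg B"
proof -
  have z: "(\<lambda>x. 0) \<in> B" using assms(1) by (simp add: function_lattice_algebra_def)
  show ?thesis unfolding A_alg_def
    apply (intro CollectI allI impI)
    apply (rule bexI[where x=h])
     apply (rule bexI[where x="\<lambda>x. 0"])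
    using assms(2) z by auto
qed

lemma A_bdd:
  assumes B: "function_lattice_algebra B" and a: "a \<in> A_alg B"
  shows "\<exists>M. \<forall>x. cmod (a x) \<le> M"
proof -
  obtain f g where f: "f\<in>B" "g\<in>B" and app: "\<forall>x. cmod (a x - (complex_of_real (f x) + \<i> * complex_of_real (g x))) \<le> 1"
  proof -
    from a have "\<forall>\<epsilon>>0. \<exists>f\<in>B. \<exists>g\<in>B. \<forall>x. cmod (a x - (complex_of_real (f x) + \<i> * complex_of_real (g x))) \<le> \<epsilon>"
      unfolding A_alg_def by simp
    then have "\<exists>f\<in>B. \<exists>g\<in>B. \<forall>x. cmod (a x - (complex_of_real (f x) + \<i> * complex_of_real (g x))) \<le> 1"
      by (drule_tac spec[of _ 1]) simp
    then show ?thesis using that by blast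
  qed
  from B f have "bounded (range f)" "bounded (range g)" by (auto simp: function_lattice_algebra_def)
  then obtain Mf Mg where Mf: "\<forall>x. \<bar>f x\<bar> \<le> Mf" and Mg: "\<forall>x. \<bar>g x\<bar> \<le> Mg" by (auto simp: bounded_iff)
  have "cmod (a x) \<le> 1 + Mf + Mg" for x
  proof -
    define p where "p = complex_of_real (f x) + \<i> * complex_of_real (g x)"
    have ap: "cmod (a x - p) \<le> 1" using app p_def by blast
    have "cmod (a x) \<le> cmod (a x - p) + cmod p"
      using norm_triangle_ineq[of "a x - p" p] by (simp only: diff_add_cancel)
    moreover have "cmod p \<le> cmod (complex_of_real (f x)) + cmod (\<i> * complex_of_real (g x))"
      unfolding p_def by (rule norm_triangle_ineq)
    moreover have "cmod (complex_of_real (f x)) \<le> Mf" using Mf by (simp only: norm_of_real)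
    moreover have "cmod (\<i> * complex_of_real (g x)) \<le> Mg" using Mg by (simp only: norm_mult norm_ii norm_of_real mult_1)
    ultimately show ?thesis using ap by linarith
  qed
  then show ?thesis by blast
qed

lemma A_mult:
  assumes B: "function_lattice_algebra B" and a: "a \<in> A_alg B" and b: "b \<in> A_alg B"
  shows "(\<lambda>x. a x * b x) \<in> A_alg B"
proof -
  obtain Ma where Ma: "\<forall>x. cmod (a x) \<le> Ma" using A_bdd[OF B a] by blast
  obtain Mb where Mb: "\<forall>x. cmod (b x) \<le> Mb" using A_bdd[OF B b] by blast
  have Ma0: "0 \<le> Ma" using Ma norm_ge_zero order_trans by blast
  have Mb0: "0 \<le> Mb" using Mb norm_ge_zero order_trans by blast
  from B have add: "\<And>u v. u\<in>B \<Longrightarrow> v\<in>B \<Longrightarrow> (\<lambda>x. u x + v x) \<in> B"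
    and scal: "\<And>c u. u\<in>B \<Longrightarrow> (\<lambda>x. c * u x) \<in> B"
    and mul: "\<And>u v. u\<in>B \<Longrightarrow> v\<in>B \<Longrightarrow> (\<lambda>x. u x * v x) \<in> B"
    unfolding function_lattice_algebra_def by blast+
  show ?thesis unfolding A_alg_def
  proof (intro CollectI allI impI)
    fix \<epsilon> :: real assume ep: "\<epsilon> > 0"
    define \<delta> where "\<delta> = min 1 (\<epsilon> / (Ma + Mb + 1))"
    have d0: "\<delta> > 0" using ep Ma0 Mb0 by (simp add: \<delta>_def)
    have d1: "\<delta> \<le> 1" by (simp add: \<delta>_def)
    have d3: "\<delta> \<le> \<epsilon> / (Ma + Mb + 1)" by (simp add: \<delta>_def)
    have d2: "\<delta> * (Ma + Mb + 1) \<le> \<epsilon>" using d3 Ma0 Mb0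
      by (simp add: pos_le_divide_eq)
    obtain f1 g1 where fg1: "f1\<in>B" "g1\<in>B" and ap1: "\<forall>x. cmod (a x - (complex_of_real (f1 x) + \<i> * complex_of_real (g1 x))) \<le> \<delta>"
    proof -
      from a have "\<forall>\<epsilon>>0. \<exists>f\<in>B. \<exists>g\<in>B. \<forall>x. cmod (a x - (complex_of_real (f x) + \<i> * complex_of_real (g x))) \<le> \<epsilon>"
        unfolding A_alg_def by simp
      then have "\<exists>f\<in>B. \<exists>g\<in>B. \<forall>x. cmod (a x - (complex_of_real (f x) + \<i> * complex_of_real (g x))) \<le> \<delta>"
        using d0 by blast
      then show ?thesis using that by blast
    qed
    obtain f2 g2 where fg2: "f2\<in>B" "g2\<in>B" and ap2: "\<forall>x. cmod (b x - (complex_of_real (f2 x) + \<i> * complex_of_real (g2 x))) \<le> \<delta>"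
    proof -
      from b have "\<forall>\<epsilon>>0. \<exists>f\<in>B. \<exists>g\<in>B. \<forall>x. cmod (b x - (complex_of_real (f x) + \<i> * complex_of_real (g x))) \<le> \<epsilon>"
        unfolding A_alg_def by simp
      then have "\<exists>f\<in>B. \<exists>g\<in>B. \<forall>x. cmod (b x - (complex_of_real (f x) + \<i> * complex_of_real (g x))) \<le> \<delta>"
        using d0 by blast
      then show ?thesis using that by blast
    qed
    define F where "F = (\<lambda>x. f1 x * f2 x + (-1) * (g1 x * g2 x))"
    define G where "G = (\<lambda>x. f1 x * g2 x + g1 x * f2 x)"
    have FB: "F \<in> B" unfolding F_def using fg1 fg2 by (intro add scal mul) auto
    have GB: "G \<in> B" unfolding G_def using fg1 fg2 by (intro add mul) auto
    show "\<exists>f\<in>B. \<exists>g\<in>B. \<forall>x. cmod (a x * b x - (complex_of_real (f x) + \<i> * complex_of_real (g x))) \<le> \<epsilon>"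
    proof (rule bexI[OF _ FB], rule bexI[OF _ GB], rule allI)
      fix x
      define p where "p = complex_of_real (f1 x) + \<i> * complex_of_real (g1 x)"
      define q where "q = complex_of_real (f2 x) + \<i> * complex_of_real (g2 x)"
      have pq: "complex_of_real (F x) + \<i> * complex_of_real (G x) = p * q"
        by (simp add: F_def G_def p_def q_def complex_eq_iff)
      have e1: "cmod (a x - p) \<le> \<delta>" using ap1 p_def by simp
      have e2: "cmod (b x - q) \<le> \<delta>" using ap2 q_def by simp
      have bx: "cmod (b x) \<le> Mb" using Mb by blast
      have ax: "cmod (a x) \<le> Ma" using Ma by blast
      have qb: "cmod q \<le> Mb + 1"
      proof -
        have "cmod q \<le> cmod (b x) + cmod (b x - q)" using norm_triangle_sub[of q "b x"] by (simp add: norm_minus_commute)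
        then show ?thesis using bx e2 d1 by linarith
      qed
      have "a x * b x - p * q = a x * (b x - q) + (a x - p) * q" by (simp add: algebra_simps)
      moreover have "cmod (a x * (b x - q) + (a x - p) * q) \<le> cmod (a x * (b x - q)) + cmod ((a x - p) * q)"
        by (rule norm_triangle_ineq)
      ultimately have "cmod (a x * b x - p * q) \<le> cmod (a x) * cmod (b x - q) + cmod (a x - p) * cmod q"
        by (simp add: norm_mult)
      also have "\<dots> \<le> Ma * \<delta> + \<delta> * (Mb + 1)"
      proof (rule add_mono)
        show "cmod (a x) * cmod (b x - q) \<le> Ma * \<delta>" using ax e2 Ma0 by (intro mult_mono) auto
        show "cmod (a x - p) * cmod q \<le> \<delta> * (Mb + 1)" using qb e1 d0 by (intro mult_mono) auto
      qed
      also have "\<dots> \<le> \<epsilon>" using d2 by (simp add: algebra_simps)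
      finally show "cmod (a x * b x - (complex_of_real (F x) + \<i> * complex_of_real (G x))) \<le> \<epsilon>"
        using pq by simp
    qed
  qed
qed

lemma char_bound:
  assumes psi: "\<psi> \<in> gelfand_spectrum (A_alg B)" and B: "function_lattice_algebra B"
    and a: "a \<in> A_alg B" and aM: "\<forall>x. cmod (a x) \<le> M"
  shows "cmod (\<psi> a) \<le> M"
proof -
  obtain C where C: "\<forall>a\<in>A_alg B. \<forall>M. (\<forall>x. cmod (a x) \<le> M) \<longrightarrow> cmod (\<psi> a) \<le> C * M"
    using psi unfolding gelfand_spectrum_def by blast
  have mult: "\<forall>a\<in>A_alg B. \<forall>b\<in>A_alg B. \<psi> (\<lambda>x. a x * b x) = \<psi> a * \<psi> b"
    using psi unfolding gelfand_spectrum_def by blast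
  define pw where "pw n = (\<lambda>x. a x ^ Suc n)" for n
  have pwA: "pw n \<in> A_alg B \<and> \<psi> (pw n) = \<psi> a ^ Suc n" for n
  proof (induction n)
    case 0
    have "pw 0 = a" by (simp add: pw_def)
    then show ?case using a by simp
  next
    case (Suc n)
    have e: "pw (Suc n) = (\<lambda>x. a x * pw n x)" by (simp add: pw_def)
    show ?case unfolding e using Suc a mult A_mult[OF B a, of "pw n"] by simp
  qed
  have M0: "0 \<le> M" using aM norm_ge_zero order_trans by blast
  have bnd: "cmod (\<psi> a) ^ Suc n \<le> C * M ^ Suc n" for n
  proof -
    have "\<forall>x. cmod (pw n x) \<le> M ^ Suc n"
      unfolding pw_def norm_power using aM by (intro allI power_mono) auto
    then have "cmod (\<psi> (pw n)) \<le> C * M ^ Suc n" using C pwA by blast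
    moreover have "cmod (\<psi> (pw n)) = cmod (\<psi> a) ^ Suc n"
      using pwA[of n] by (simp only: norm_power)
    ultimately show ?thesis by simp
  qed
  show ?thesis
  proof (rule ccontr)
    assume "\<not> cmod (\<psi> a) \<le> M"
    then have gt: "cmod (\<psi> a) > M" by simp
    show False
    proof (cases "M = 0")
      case True
      then show False using bnd[of 0] gt by simp
    next
      case False
      then have Mp: "M > 0" using M0 by simp
      define r where "r = cmod (\<psi> a) / M"
      have r1: "r > 1" using gt Mp by (simp add: r_def)
      obtain n where n: "C < r ^ n" using real_arch_pow[OF r1] by blast
      have Mn: "M ^ Suc n > 0" using Mp by simp
      have "C * M ^ Suc n < r ^ n * M ^ Suc n" using n Mn by (rule mult_strict_right_mono)
      also have "\<dots> \<le> r ^ Suc n * M ^ Suc n"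
        using r1 Mn by (intro mult_right_mono) (auto intro: power_increasing)
      also have "\<dots> = cmod (\<psi> a) ^ Suc n"
        using Mp by (simp add: r_def power_divide)
      finally show False using bnd[of n] by simp
    qed
  qed
qed

theorem mainTheorem7:
  fixes B :: "('a \<Rightarrow> real) set"
  assumes "function_lattice_algebra B"
    and "\<forall>x. \<exists>f\<in>B. f x \<noteq> 0"
  shows "\<forall>f\<in>B. \<forall>\<epsilon>>0. \<exists>g\<in>B_c B. \<forall>x. \<bar>f x - g x\<bar> \<le> \<epsilon>"
proof (intro ballI allI impI)
  fix f \<epsilon> assume fB: "f \<in> B" and ep: "(\<epsilon>::real) > 0"
  note BL = assms(1)
  from BL have add: "\<And>u v. u\<in>B \<Longrightarrow> v\<in>B \<Longrightarrow> (\<lambda>x. u x + v x) \<in> B"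
    and scal: "\<And>c u. u\<in>B \<Longrightarrow> (\<lambda>x. c * u x) \<in> B"
    and mx: "\<And>u v. u\<in>B \<Longrightarrow> v\<in>B \<Longrightarrow> (\<lambda>x. max (u x) (v x)) \<in> B"
    and mn1: "\<And>u. u\<in>B \<Longrightarrow> (\<lambda>x. min (u x) 1) \<in> B"
    unfolding function_lattice_algebra_def by blast+
  have mne: "(\<lambda>x. min (u x) \<epsilon>) \<in> B" if "u \<in> B" for u
  proof -
    have "(\<lambda>x. (1/\<epsilon>) * u x) \<in> B" using scal that by blast
    then have "(\<lambda>x. min ((1/\<epsilon>) * u x) 1) \<in> B" by (rule mn1)
    then have "(\<lambda>x. \<epsilon> * min ((1/\<epsilon>) * u x) 1) \<in> B" by (rule scal)
    moreover have "(\<lambda>x. \<epsilon> * min ((1/\<epsilon>) * u x) 1) = (\<lambda>x. min (u x) \<epsilon>)"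
    proof
      fix x
      have "\<epsilon> * min ((1/\<epsilon>) * u x) 1 = min (\<epsilon> * ((1/\<epsilon>) * u x)) (\<epsilon> * 1)"
        using ep by (simp add: min_mult_distrib_left)
      then show "\<epsilon> * min ((1/\<epsilon>) * u x) 1 = min (u x) \<epsilon>" using ep by simp
    qed
    ultimately show ?thesis by simp
  qed
  define g where "g = (\<lambda>x. f x + (-1) * ((-1) * min ((-1) * min (f x) \<epsilon>) \<epsilon>))"
  define e where "e = (\<lambda>x. min ((1/\<epsilon>) * max (f x) ((-1) * f x)) 1)"
  have gB: "g \<in> B"
  proof -
    have "(\<lambda>x. min (f x) \<epsilon>) \<in> B" using mne fB by blast
    then have "(\<lambda>x. (-1) * min (f x) \<epsilon>) \<in> B" by (rule scal)
    then have "(\<lambda>x. min ((-1) * min (f x) \<epsilon>) \<epsilon>) \<in> B" by (rule mne)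
    then have "(\<lambda>x. (-1) * min ((-1) * min (f x) \<epsilon>) \<epsilon>) \<in> B" by (rule scal)
    then have "(\<lambda>x. (-1) * ((-1) * min ((-1) * min (f x) \<epsilon>) \<epsilon>)) \<in> B" by (rule scal)
    then show ?thesis unfolding g_def using fB add by blast
  qed
  have eB: "e \<in> B"
  proof -
    have "(\<lambda>x. (-1) * f x) \<in> B" using fB by (rule scal)
    then have "(\<lambda>x. max (f x) ((-1) * f x)) \<in> B" using fB mx by blast
    then have "(\<lambda>x. (1/\<epsilon>) * max (f x) ((-1) * f x)) \<in> B" by (rule scal)
    then show ?thesis unfolding e_def by (rule mn1)
  qed
  have gval: "g x = (if \<bar>f x\<bar> \<le> \<epsilon> then 0 else if f x > \<epsilon> then f x - \<epsilon> else f x + \<epsilon>)" for x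
    using ep by (auto simp: g_def min_def)
  have ge: "g x * e x = g x" for x
  proof (cases "\<bar>f x\<bar> \<le> \<epsilon>")
    case True then show ?thesis by (simp add: gval)
  next
    case False
    then have "max (f x) ((-1) * f x) > \<epsilon>" by auto
    then have "(1/\<epsilon>) * max (f x) ((-1) * f x) > 1" using ep by (simp add: field_simps)
    then have "e x = 1" by (simp add: e_def)
    then show ?thesis by simp
  qed
  have fg: "\<bar>f x - g x\<bar> \<le> \<epsilon>" for x using ep by (auto simp: gval)
  define A where "A = A_alg B"
  define P where "P = product_topology (\<lambda>_::('a\<Rightarrow>complex). (euclidean::complex topology)) A"
  define gc where "gc = (\<lambda>x. complex_of_real (g x))"
  define ec where "ec = (\<lambda>x. complex_of_real (e x))"
  have gcA: "gc \<in> A" unfolding gc_def A_def using A_real[OF BL gB] .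
  have ecA: "ec \<in> A" unfolding ec_def A_def using A_real[OF BL eB] .
  have gce: "(\<lambda>x. gc x * ec x) = gc"
  proof
    fix x show "gc x * ec x = gc x" unfolding gc_def ec_def using ge[of x]
      by (metis of_real_mult)
  qed
  define K where "K = {\<psi> \<in> gelfand_spectrum A. \<psi> ec = 1}"
  have topP: "topspace P = extensional A" by (simp add: P_def PiE_def)
  have gt: "gelfand_topology A = subtopology P (gelfand_spectrum A)"
    by (simp add: gelfand_topology_def P_def)
  have spec_sub: "gelfand_spectrum A \<subseteq> topspace P" by (auto simp: gelfand_spectrum_def topP)
  have cp: "continuous_map P euclidean (\<lambda>\<psi>. \<psi> k)" for k unfolding P_def by (rule cont_proj)
  define T1 where "T1 = {\<psi>\<in>topspace P. \<forall>a\<in>A. \<forall>b\<in>A. \<psi> (\<lambda>x. a x + b x) = \<psi> a + \<psi> b}"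
  define T2 where "T2 = {\<psi>\<in>topspace P. \<forall>c\<in>UNIV. \<forall>a\<in>A. \<psi> (\<lambda>x. c * a x) = c * \<psi> a}"
  define T3 where "T3 = {\<psi>\<in>topspace P. \<forall>a\<in>A. \<forall>b\<in>A. \<psi> (\<lambda>x. a x * b x) = \<psi> a * \<psi> b}"
  define T4 where "T4 = {\<psi>\<in>topspace P. \<forall>a\<in>A. \<forall>M\<in>{M. \<forall>x. cmod (a x) \<le> M}. cmod (\<psi> a) \<le> M}"
  define T5 where "T5 = {\<psi>\<in>topspace P. \<psi> ec = 1}"
  define T where "T = T1 \<inter> T2 \<inter> T3 \<inter> T4 \<inter> T5"
  have c1: "closedin P T1" unfolding T1_def
    by (intro closedin_all ceq continuous_map_add cp)
  have c2: "closedin P T2" unfolding T2_def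
    by (intro closedin_all ceq cmult_cont cp continuous_map_const[THEN iffD2]) simp
  have c3: "closedin P T3" unfolding T3_def
    by (intro closedin_all ceq cmult_cont cp)
  have c4: "closedin P T4" unfolding T4_def
    by (intro closedin_all cle cp)
  have c5: "closedin P T5" unfolding T5_def
    by (intro ceq cp) simp
  have Tc: "closedin P T" unfolding T_def using c1 c2 c3 c4 c5 by (intro closedin_Int)
  have KT: "K = T"
  proof
    show "K \<subseteq> T"
    proof
      fix \<psi> assume k: "\<psi> \<in> K"
      then have sp: "\<psi> \<in> gelfand_spectrum A" and one: "\<psi> ec = 1" by (auto simp: K_def)
      have ts: "\<psi> \<in> topspace P" using sp spec_sub by blast
      have "\<psi> \<in> T4" unfolding T4_def using ts char_bound[of \<psi> B] sp BL by (auto simp: A_def)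
      then show "\<psi> \<in> T" using sp ts one
        unfolding T_def T1_def T2_def T3_def T5_def by (auto simp: gelfand_spectrum_def)
    qed
  next
    show "T \<subseteq> K"
    proof
      fix \<psi> assume t: "\<psi> \<in> T"
      have bd: "\<exists>C. \<forall>a\<in>A. \<forall>M. (\<forall>x. cmod (a x) \<le> M) \<longrightarrow> cmod (\<psi> a) \<le> C * M"
        using t by (intro exI[of _ 1]) (auto simp: T_def T4_def)
      have "\<psi> ec = 1" using t by (simp add: T_def T5_def)
      then have nz: "\<exists>a\<in>A. \<psi> a \<noteq> 0" using ecA by (intro bexI[of _ ec]) auto
      show "\<psi> \<in> K" using t bd nz
        unfolding K_def gelfand_spectrum_def T_def T1_def T2_def T3_def T5_def topP by auto
    qed
  qed
  define Mb where "Mb a = (SOME M. \<forall>x. cmod (a x) \<le> M)" for a :: "'a \<Rightarrow> complex"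
  have Mb: "\<forall>x. cmod (a x) \<le> Mb a" if "a \<in> A" for a
  proof -
    have "\<exists>M. \<forall>x. cmod (a x) \<le> M" using A_bdd[OF BL, of a] that by (simp add: A_def)
    then show ?thesis unfolding Mb_def by (rule someI_ex)
  qed
  have TPi: "T \<subseteq> PiE A (\<lambda>a. cball 0 (Mb a))"
  proof
    fix \<psi> assume t: "\<psi> \<in> T"
    then have ts: "\<psi> \<in> extensional A" and b4: "\<psi> \<in> T4" by (auto simp: T_def T1_def topP)
    show "\<psi> \<in> PiE A (\<lambda>a. cball 0 (Mb a))"
      using ts b4 Mb unfolding T4_def PiE_def by (auto simp: Pi_def)
  qed
  have "compactin P (PiE A (\<lambda>a. cball 0 (Mb a)))" unfolding P_def
    by (simp add: compactin_PiE)
  then have "compactin P T" using TPi Tc by (rule closed_compactin)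
  then have Kc: "compactin (gelfand_topology A) K"
  proof -
    have "K \<subseteq> gelfand_spectrum A" by (auto simp: K_def)
    then show ?thesis using KT \<open>compactin P T\<close> by (simp add: gt compactin_subtopology)
  qed
  have Kcl: "closedin (gelfand_topology A) K"
  proof -
    have "continuous_map (gelfand_topology A) euclidean (\<lambda>\<psi>. \<psi> ec)"
      unfolding gt by (rule continuous_map_from_subtopology) (rule cp)
    then have "closedin (gelfand_topology A) {\<psi> \<in> topspace (gelfand_topology A). \<psi> ec \<in> {1}}"
      by (rule closedin_continuous_map_preimage) simp
    moreover have "topspace (gelfand_topology A) = gelfand_spectrum A"
      using spec_sub by (auto simp: gt)
    ultimately show ?thesis by (simp add: K_def)
  qed
  have S0K: "{\<psi> \<in> gelfand_spectrum A. gelfand_transform gc \<psi> \<noteq> 0} \<subseteq> K"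
  proof
    fix \<psi> assume "\<psi> \<in> {\<psi> \<in> gelfand_spectrum A. gelfand_transform gc \<psi> \<noteq> 0}"
    then have sp: "\<psi> \<in> gelfand_spectrum A" and nz: "\<psi> gc \<noteq> 0" by (auto simp: gelfand_transform_def)
    have "\<psi> (\<lambda>x. gc x * ec x) = \<psi> gc * \<psi> ec" using sp gcA ecA by (auto simp: gelfand_spectrum_def)
    then have "\<psi> gc = \<psi> gc * \<psi> ec" using gce by simp
    then have "\<psi> ec = 1" using nz by (metis mult_cancel_left1)
    then show "\<psi> \<in> K" using sp by (simp add: K_def)
  qed
  have "compactin (gelfand_topology A) ((gelfand_topology A) closure_of {\<psi> \<in> gelfand_spectrum A. gelfand_transform gc \<psi> \<noteq> 0})"
    using Kc closure_of_minimal[OF S0K Kcl] closedin_closure_of by (rule closed_compactin)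
  then have "g \<in> B_c B" using gB unfolding B_c_def compactly_supported_transform_def A_def gc_def by simp
  then show "\<exists>g\<in>B_c B. \<forall>x. \<bar>f x - g x\<bar> \<le> \<epsilon>" using fg by blast
qed

end
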